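(* Let $n\ge 3$ and let $x_1,x_2,x_3,x_4$ be distinct vertices of $H_2(n,n-1)$ such that $x_1\sim x_2$, $x_2\sim x_3$, $x_3\sim x_4$ and $x_4\sim x_1$. Then $x_1+x_2=x_3+x_4$ and $x_1+x_4=x_2+x_3$.
   Context: $H_2(n,n-1)$ is the simple undirected graph with vertex set $\mathbb{Z}_2^n$ in which $x\sim y$ (adjacent) iff their Hamming distance $|\{i:x_i\ne y_i\}|$ is at least $n-1$. Addition is in $\mathbb{Z}_2^n$. *)

theory Defs
  imports Main
begin

text \<open>Vertices of H_2(n,n-1): elements of Z_2^n, represented as boolean lists of length n
  (True = 1, False = 0).\<close>

definition Z2n :: "nat \<Rightarrow> bool list set" where
  "Z2n n = {x. length x = n}"

definition vadd :: "bool list \<Rightarrow> bool list \<Rightarrow> bool list" where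
  "vadd x y = map2 (\<noteq>) x y"

definition hamming :: "bool list \<Rightarrow> bool list \<Rightarrow> nat" where
  "hamming x y = card {i. i < length x \<and> x ! i \<noteq> y ! i}"

text \<open>Adjacency in H_2(n,n-1) (simple graph, so distinct vertices).\<close>
definition H_adj :: "nat \<Rightarrow> bool list \<Rightarrow> bool list \<Rightarrow> bool" where
  "H_adj n x y \<longleftrightarrow> x \<in> Z2n n \<and> y \<in> Z2n n \<and> x \<noteq> y \<and> hamming x y \<ge> n - 1"

end

theory Submission
  imports Defs
begin

lemma uniq:
  assumes "H_adj n x y" "m < n" "m' < n" "x!m = y!m" "x!m' = y!m'"
  shows "m = m'"
proof (rule ccontr)
  assume ne: "m \<noteq> m'"
  have lx: "length x = n" using assms(1) by (simp add: H_adj_def Z2n_def)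
  have sub: "{i. i < length x \<and> x ! i \<noteq> y ! i} \<subseteq> {..<n} - {m, m'}"
    using assms lx by auto
  have "card {i. i < length x \<and> x ! i \<noteq> y ! i} \<le> card ({..<n} - {m, m'})"
    by (rule card_mono[OF _ sub]) simp
  also have "\<dots> = n - 2" using assms ne by (simp add: card_Diff_subset)
  finally have "hamming x y \<le> n - 2" by (simp add: hamming_def)
  moreover have "hamming x y \<ge> n - 1" using assms(1) by (simp add: H_adj_def)
  ultimately show False using assms ne by linarith
qed

lemma neq_pos:
  assumes "x \<noteq> z" "length x = n" "length z = n"
  shows "\<exists>m<n. x!m \<noteq> z!m"
  using assms nth_equalityI by metis

theorem lemma5p4:
  fixes n :: nat and x1 x2 x3 x4 :: "bool list"
  assumes "n \<ge> 3"
    and "x1 \<in> Z2n n" "x2 \<in> Z2n n" "x3 \<in> Z2n n" "x4 \<in> Z2n n"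
    and "distinct [x1, x2, x3, x4]"
    and "H_adj n x1 x2" "H_adj n x2 x3" "H_adj n x3 x4" "H_adj n x4 x1"
  shows "vadd x1 x2 = vadd x3 x4 \<and> vadd x1 x4 = vadd x2 x3"
proof -
  have l: "length x1 = n" "length x2 = n" "length x3 = n" "length x4 = n"
    using assms(2-5) by (auto simp: Z2n_def)
  obtain a where a: "a<n" "x1!a \<noteq> x3!a" using neq_pos[of x1 x3 n] assms(6) l by auto
  obtain b where b: "b<n" "x2!b \<noteq> x4!b" using neq_pos[of x2 x4 n] assms(6) l by auto
  have u1: "\<And>m m'. m<n \<Longrightarrow> m'<n \<Longrightarrow> x1!m = x2!m \<Longrightarrow> x1!m' = x2!m' \<Longrightarrow> m = m'"
    using uniq[OF assms(7)] by blast
  have u2: "\<And>m m'. m<n \<Longrightarrow> m'<n \<Longrightarrow> x2!m = x3!m \<Longrightarrow> x2!m' = x3!m' \<Longrightarrow> m = m'"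
    using uniq[OF assms(8)] by blast
  have u3: "\<And>m m'. m<n \<Longrightarrow> m'<n \<Longrightarrow> x3!m = x4!m \<Longrightarrow> x3!m' = x4!m' \<Longrightarrow> m = m'"
    using uniq[OF assms(9)] by blast
  have u4: "\<And>m m'. m<n \<Longrightarrow> m'<n \<Longrightarrow> x4!m = x1!m \<Longrightarrow> x4!m' = x1!m' \<Longrightarrow> m = m'"
    using uniq[OF assms(10)] by blast
  have pt: "(x1!m \<noteq> x2!m) = (x3!m \<noteq> x4!m)" if m: "m<n" for m
  proof (rule ccontr)
    assume h: "\<not> ?thesis"
    show False
    proof (cases "x1!m = x2!m")
      case True
      show False
      proof (cases "x2!m = x3!m")
        case True2: True
        have "x1!a = x2!a \<or> x2!a = x3!a" using a by auto
        then show False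
          using u1[OF m a(1)] u2[OF m a(1)] True True2 a h by auto
      next
        case False
        have "x4!m = x1!m" using True False h by auto
        have "x1!b = x2!b \<or> x4!b = x1!b" using b by auto
        then show False
          using u1[OF m b(1)] u4[OF m b(1)] True \<open>x4!m = x1!m\<close> b h by auto
      qed
    next
      case False
      have "x3!m = x4!m" using False h by auto
      show False
      proof (cases "x2!m = x3!m")
        case True2: True
        have "x2!b = x3!b \<or> x3!b = x4!b" using b by auto
        then show False
          using u2[OF m b(1)] u3[OF m b(1)] True2 \<open>x3!m = x4!m\<close> b h by auto
      next
        case F2: False
        have "x3!a = x4!a \<or> x4!a = x1!a" using a by auto
        then show False
          using u3[OF m a(1)] u4[OF m a(1)] False F2 \<open>x3!m = x4!m\<close> a h by auto
      qed
    qed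
  qed
  show ?thesis
    unfolding vadd_def
    by (intro conjI nth_equalityI) (use l pt in auto)
qed

end
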